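(* Consider the two-species symmetric simple exclusion process on $\mathbb{Z}$ (i.e. $p=q=1/2$) with $N-1$ first-class particles and one second-class particle, started from integer positions $y_1<\cdots<y_N$ where the particle at $y_N$ is the second-class particle. Let $\eta(t)$ be the position of the second-class particle at time $t\ge0$. Then for every $x\in\mathbb{Z}$, \[ \mathbb{P}(\eta(t)=x)=\frac{1}{2\pi i}\oint_c \xi^{x-y_N-1}e^{\left(\frac{1}{2\xi}+\frac{\xi}{2}-1\right)t}\,d\xi, \] where $c$ is a counterclockwise circle centered at the origin of small radius.
   Context: Dynamics: each particle independently waits an exponential time with parameter $1$, then attempts to jump one step to the right or to the left, each with probability $1/2$. A jump to an empty site is performed; a first-class particle attempting to jump onto the site of the second-class particle exchanges positions with it; all other jumps onto occupied sites are suppressed. *)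

theory Defs
  imports "HOL-Probability.Probability" "HOL-Complex_Analysis.Complex_Analysis"
begin

text \<open>Configuration of the two-species exclusion process on the integers:
  the (finite) set of sites occupied by first-class particles, and the site
  of the second-class particle.\<close>
type_synonym config = "int set \<times> int"

definition step :: "config \<Rightarrow> int \<Rightarrow> int \<Rightarrow> config" where
  "step c z d = (let A = fst c; s = snd c in
     if z \<in> A then
       (if z + d = s then (insert s (A - {z}), z)
        else if z + d \<in> A then (A, s)
        else (insert (z + d) (A - {z}), s))
     else if z = s then
       (if z + d \<in> A then (A, s) else (A, z + d))
     else (A, s))"

definition jump_kernel :: "config \<Rightarrow> config pmf" where
  "jump_kernel c =
     pmf_of_set (insert (snd c) (fst c)) \<bind>
       (\<lambda>z. pmf_of_set {-1, 1::int} \<bind> (\<lambda>d. return_pmf (step c z d)))"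

primrec n_steps :: "nat \<Rightarrow> config \<Rightarrow> config pmf" where
  "n_steps 0 c = return_pmf c"
| "n_steps (Suc n) c = n_steps n c \<bind> jump_kernel"

text \<open>Law at time t of the continuous-time process (every particle carries a
  rate-1 exponential clock), via uniformization: with N particles the total
  clock rate is N, so the number of attempted jumps by time t is Poisson(N t).\<close>
definition proc_prob :: "real \<Rightarrow> config \<Rightarrow> (config \<Rightarrow> bool) \<Rightarrow> real" where
  "proc_prob t c P =
     (let N = real (card (fst c) + 1) in
      (\<Sum>n. exp (- N * t) * (N * t) ^ n / fact n *
             measure_pmf.prob (n_steps n c) {c'. P c'}))"

end

theory Submission
  imports Defs
begin

lemma circ_powi:
  assumes r: "r > 0"
  shows "((\<lambda>\<xi>::complex. \<xi> powi m) has_contour_integral (if m = -1 then 2*pi*\<i> else 0)) (circlepath 0 r)"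
proof (cases "m = -1")
  case True
  have "((\<lambda>w. 1/(w - 0)) has_contour_integral (2*pi*\<i>*winding_number (circlepath 0 r) 0)) (circlepath 0 r)"
    by (rule has_contour_integral_winding_number) (use r in auto)
  moreover have "(\<lambda>w::complex. 1/(w - 0)) = (\<lambda>w. w powi m)"
    using True by (auto simp: power_int_minus divide_inverse)
  ultimately show ?thesis using True winding_number_circlepath_centre[OF r] by simp
next
  case False
  have nz0: "complex_of_int (m+1) \<noteq> 0" unfolding of_int_eq_0_iff using False by linarith
  then have nz: "complex_of_int m + 1 \<noteq> 0" by simp
  have "((\<lambda>\<xi>. \<xi> powi m) has_contour_integral 0) (circlepath 0 r)"
  proof (rule Cauchy_theorem_primitive[where S="-{0}" and f="\<lambda>\<xi>. \<xi> powi (m+1) / of_int (m+1)"])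
    fix w :: complex assume "w \<in> -{0}"
    then have "((\<lambda>\<xi>. \<xi> powi (m+1) / of_int (m+1)) has_field_derivative
        (of_int (m+1) * w powi (m + 1 - 1) * 1) / of_int (m+1)) (at w within -{0})"
      using nz by (intro derivative_eq_intros) auto
    then show "((\<lambda>\<xi>. \<xi> powi (m+1) / of_int (m+1)) has_field_derivative w powi m) (at w within -{0})"
      using nz0 by simp
  qed (use r in auto)
  then show ?thesis using False by simp
qed

definition kval :: "nat \<Rightarrow> int \<Rightarrow> int \<Rightarrow> real" where
  "kval N s y = (if y = s then 1 - 1 / real N else 0) + (if y = s - 1 then 1 / (2 * real N) else 0)
     + (if y = s + 1 then 1 / (2 * real N) else 0)"

lemma sum_if_eq_aux:
  assumes "finite A"
  shows "(\<Sum>z\<in>A. if z = a then u else v) = (if a \<in> A then u + v * (real (card A) - 1) else v * real (card A))"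
proof (cases "a \<in> A")
  case True
  have "(\<Sum>z\<in>A. if z = a then u else v) = (\<Sum>z\<in>insert a (A - {a}). if z = a then u else v)"
    using True by (simp add: insert_absorb)
  also have "\<dots> = u + (\<Sum>z\<in>A - {a}. if z = a then u else v)"
    using assms by (subst sum.insert) auto
  also have "(\<Sum>z\<in>A - {a}. if z = a then u else v) = (\<Sum>z\<in>A - {a}. v)"
    by (rule sum.cong) auto
  also have "\<dots> = v * (real (card A) - 1)"
  proof -
    have c0: "card A > 0" using True assms by (auto simp: card_gt_0_iff)
    have "(\<Sum>z\<in>A - {a}. v) = v * real (card (A - {a}))" by simp
    also have "card (A - {a}) = card A - 1" using True by simp
    also have "real (card A - 1) = real (card A) - 1" using c0 by (simp add: of_nat_diff)
    finally show ?thesis .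
  qed
  finally show ?thesis using True by simp
next
  case False
  have "(\<Sum>z\<in>A. if z = a then u else v) = (\<Sum>z\<in>A. v)"
    by (rule sum.cong) (use False in auto)
  then show ?thesis using False by (simp add: mult.commute)
qed

lemma snd_step_A: "z \<in> A \<Longrightarrow> snd (step (A, s) z d) = (if z + d = s then z else s)"
  by (simp add: step_def Let_def)

lemma snd_step_s: "s \<notin> A \<Longrightarrow> snd (step (A, s) s d) = (if s + d \<in> A then s else s + d)"
  by (simp add: step_def Let_def)

lemma jump_snd:
  assumes fin: "finite A" and sA: "s \<notin> A"
  shows "pmf (map_pmf snd (jump_kernel (A, s))) y = kval (card A + 1) s y"
proof -
  let ?g = "\<lambda>z d. snd (step (A, s) z d)"
  let ?h = "\<lambda>z. (if ?g z (-1) = y then 1 else 0) + (if ?g z 1 = y then 1 else 0) :: real"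
  have m: "map_pmf snd (jump_kernel (A, s)) =
     pmf_of_set (insert s A) \<bind> (\<lambda>z. pmf_of_set {-1, 1::int} \<bind> (\<lambda>d. return_pmf (?g z d)))"
    by (simp add: jump_kernel_def map_bind_pmf map_return_pmf)
  have inner: "pmf (pmf_of_set {-1, 1::int} \<bind> (\<lambda>d. return_pmf (?g z d))) y = ?h z / 2" for z
    by (simp add: pmf_bind_pmf_of_set indicator_def)
  have p: "pmf (map_pmf snd (jump_kernel (A, s))) y = (\<Sum>z\<in>insert s A. ?h z / 2) / real (card A + 1)"
    unfolding m using fin sA by (simp add: pmf_bind_pmf_of_set inner)
  have sumA: "(\<Sum>z\<in>A. ?h z) = (\<Sum>z\<in>A. (if z = s + 1 then (if z = y then 1 else 0) else (if s = y then 1 else 0)))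
      + (\<Sum>z\<in>A. (if z = s - 1 then (if z = y then 1 else 0) else (if s = y then 1 else 0)))"
    by (subst sum.distrib[symmetric], rule sum.cong) (auto simp: snd_step_A)
  have hs: "?h s = (if (if s - 1 \<in> A then s else s - 1) = y then 1 else 0) + (if (if s + 1 \<in> A then s else s + 1) = y then 1 else 0)"
    using sA by (simp add: snd_step_s)
  have ins: "(\<Sum>z\<in>insert s A. ?h z / 2) = (?h s + (\<Sum>z\<in>A. ?h z)) / 2"
    using fin sA by (simp add: sum_divide_distrib[symmetric])
  have tot: "pmf (map_pmf snd (jump_kernel (A, s))) y =
    ((if (if s - 1 \<in> A then s else s - 1) = y then 1 else 0) + (if (if s + 1 \<in> A then s else s + 1) = y then 1 else 0)
     + (\<Sum>z\<in>A. (if z = s + 1 then (if z = y then 1 else 0) else (if s = y then 1 else 0)))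
     + (\<Sum>z\<in>A. (if z = s - 1 then (if z = y then 1 else 0) else (if s = y then 1 else 0)))) / 2 / real (card A + 1)"
    by (simp only: p ins sumA hs add.assoc)
  have e1: "(\<Sum>z\<in>A. (if z = s + 1 then (if z = y then 1 else 0) else (if s = y then 1 else 0))) =
    (\<Sum>z\<in>A. (if z = s + 1 then (if s + 1 = y then 1 else 0) else (if s = y then 1 else 0)))"
    by (rule sum.cong) auto
  have e2: "(\<Sum>z\<in>A. (if z = s - 1 then (if z = y then 1 else 0) else (if s = y then 1 else 0))) =
    (\<Sum>z\<in>A. (if z = s - 1 then (if s - 1 = y then 1 else 0) else (if s = y then 1 else 0)))"
    by (rule sum.cong) auto
  have cA: "real (card A) + 1 > 0" by simp
  have tot2: "pmf (map_pmf snd (jump_kernel (A, s))) y =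
    ((if (if s - 1 \<in> A then s else s - 1) = y then 1 else 0) + (if (if s + 1 \<in> A then s else s + 1) = y then 1 else 0)
     + (if s + 1 \<in> A then (if s + 1 = y then 1 else 0) + (if s = y then 1 else 0) * (real (card A) - 1) else (if s = y then 1 else 0) * real (card A))
     + (if s - 1 \<in> A then (if s - 1 = y then 1 else 0) + (if s = y then 1 else 0) * (real (card A) - 1) else (if s = y then 1 else 0) * real (card A))) / 2 / real (card A + 1)"
    unfolding tot e1 e2 sum_if_eq_aux[OF fin] by (rule refl)
  have n2: "real (card A + 1) * 2 \<noteq> 0" by simp
  consider "y = s" | "y = s - 1" | "y = s + 1" | "y \<noteq> s \<and> y \<noteq> s - 1 \<and> y \<noteq> s + 1" by blast
  then show ?thesis
  proof cases
    case 1
    then show ?thesis unfolding tot2 kval_def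
      by (cases "s - 1 \<in> A"; cases "s + 1 \<in> A") (simp_all add: divide_simps)
  next
    case 2
    then show ?thesis unfolding tot2 kval_def
      by (cases "s - 1 \<in> A"; cases "s + 1 \<in> A") (simp_all add: divide_simps)
  next
    case 3
    then show ?thesis unfolding tot2 kval_def
      by (cases "s - 1 \<in> A"; cases "s + 1 \<in> A") (simp_all add: divide_simps)
  next
    case 4
    then show ?thesis unfolding tot2 kval_def by auto
  qed
qed

definition inv_c :: "nat \<Rightarrow> config \<Rightarrow> bool" where
  "inv_c N c \<longleftrightarrow> finite (fst c) \<and> snd c \<notin> fst c \<and> card (fst c) + 1 = N"

lemma step_inv:
  assumes "finite A" "s \<notin> A" "z \<in> insert s A" "d \<in> {-1, 1}"
  shows "finite (fst (step (A, s) z d)) \<and> snd (step (A, s) z d) \<notin> fst (step (A, s) z d)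
         \<and> card (fst (step (A, s) z d)) = card A"
proof (cases "z \<in> A")
  case True
  have zs: "z \<noteq> s" using True assms by auto
  have dn: "d \<noteq> 0" using assms by auto
  show ?thesis
  proof (cases "z + d = s")
    case True2: True
    have "card (insert s (A - {z})) = card A"
      using assms True by (simp add: card_Diff_singleton) (metis One_nat_def Suc_pred card_gt_0_iff empty_iff)
    then show ?thesis using True True2 assms zs by (simp add: step_def Let_def)
  next
    case False2: False
    show ?thesis
    proof (cases "z + d \<in> A")
      case True
      then show ?thesis using \<open>z \<in> A\<close> False2 assms by (simp add: step_def Let_def)
    next
      case False
      have "z + d \<notin> A - {z}" using False by auto
      then have "card (insert (z + d) (A - {z})) = card A"
        using assms \<open>z \<in> A\<close> by (simp add: card_Diff_singleton) (metis One_nat_def Suc_pred card_gt_0_iff empty_iff)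
      then show ?thesis using \<open>z \<in> A\<close> False False2 assms by (simp add: step_def Let_def)
    qed
  qed
next
  case False
  then have "z = s" using assms by auto
  then show ?thesis using assms by (simp add: step_def Let_def)
qed

lemma jump_inv:
  assumes "inv_c N c" "c' \<in> set_pmf (jump_kernel c)"
  shows "inv_c N c'"
proof -
  obtain A s where c: "c = (A, s)" by (cases c)
  have fin: "finite A" "s \<notin> A" "card A + 1 = N" using assms(1) c by (auto simp: inv_c_def)
  from assms(2) obtain z d where "z \<in> insert s A" "d \<in> {-1, 1::int}" "c' = step (A, s) z d"
    using fin unfolding c jump_kernel_def by (auto simp: set_bind_pmf)
  then show ?thesis using step_inv[OF fin(1,2)] fin(3) by (auto simp: inv_c_def)
qed

lemma nsteps_inv:
  assumes "inv_c N c" shows "c' \<in> set_pmf (n_steps n c) \<Longrightarrow> inv_c N c'"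
proof (induction n arbitrary: c')
  case 0
  then show ?case using assms by simp
next
  case (Suc n)
  then obtain c1 where "c1 \<in> set_pmf (n_steps n c)" "c' \<in> set_pmf (jump_kernel c1)"
    by (auto simp: set_bind_pmf)
  then show ?case using jump_inv Suc.IH by blast
qed

definition Pw :: "config \<Rightarrow> nat \<Rightarrow> int \<Rightarrow> real" where
  "Pw c n x = pmf (map_pmf snd (n_steps n c)) x"

lemma Pw_0: "Pw c 0 x = (if x = snd c then 1 else 0)"
  by (simp add: Pw_def map_return_pmf)

lemma Pw_Suc:
  assumes "inv_c N c"
  shows "Pw c (Suc n) x = (1 - 1 / real N) * Pw c n x + 1 / (2 * real N) * Pw c n (x + 1)
     + 1 / (2 * real N) * Pw c n (x - 1)"
proof -
  let ?p = "n_steps n c"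
  have "Pw c (Suc n) x = measure_pmf.expectation ?p (\<lambda>c'. pmf (map_pmf snd (jump_kernel c')) x)"
    by (simp add: Pw_def map_bind_pmf pmf_bind)
  also have "\<dots> = measure_pmf.expectation ?p (\<lambda>c'. (1 - 1 / real N) * indicator {c'. snd c' = x} c'
      + 1 / (2 * real N) * indicator {c'. snd c' = x + 1} c' + 1 / (2 * real N) * indicator {c'. snd c' = x - 1} c')"
  proof (rule integral_cong_AE)
    show "AE c' in measure_pmf ?p. pmf (map_pmf snd (jump_kernel c')) x = (1 - 1 / real N) * indicator {c'. snd c' = x} c'
      + 1 / (2 * real N) * indicator {c'. snd c' = x + 1} c' + 1 / (2 * real N) * indicator {c'. snd c' = x - 1} c'"
    proof (subst AE_measure_pmf_iff, intro ballI)
      fix c' assume "c' \<in> set_pmf ?p"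
      then have iv: "inv_c N c'" using nsteps_inv[OF assms] by blast
      obtain A s where c': "c' = (A, s)" by (cases c')
      have "pmf (map_pmf snd (jump_kernel c')) x = kval N s x"
        using iv jump_snd[of A s x] unfolding c' inv_c_def by simp
      then show "pmf (map_pmf snd (jump_kernel c')) x = (1 - 1 / real N) * indicator {c'. snd c' = x} c'
      + 1 / (2 * real N) * indicator {c'. snd c' = x + 1} c' + 1 / (2 * real N) * indicator {c'. snd c' = x - 1} c'"
        unfolding c' kval_def by (auto simp: indicator_def)
    qed
  qed auto
  also have "\<dots> = (1 - 1 / real N) * measure_pmf.prob ?p {c'. snd c' = x}
      + 1 / (2 * real N) * measure_pmf.prob ?p {c'. snd c' = x + 1} + 1 / (2 * real N) * measure_pmf.prob ?p {c'. snd c' = x - 1}"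
    by (simp add: measure_pmf.integrable_const_bound[where B=1])
  also have "\<dots> = (1 - 1 / real N) * Pw c n x + 1 / (2 * real N) * Pw c n (x + 1)
     + 1 / (2 * real N) * Pw c n (x - 1)"
    by (simp add: Pw_def pmf_map vimage_def)
  finally show ?thesis .
qed

definition phi :: "nat \<Rightarrow> complex \<Rightarrow> complex" where
  "phi N \<xi> = (1 - 1 / of_nat N) + (\<xi> + 1 / \<xi>) / (2 * of_nat N)"

lemma contour_walk:
  assumes iv: "inv_c N c" and r: "r > 0"
  shows "((\<lambda>\<xi>. \<xi> powi (k - 1) * phi N \<xi> ^ m) has_contour_integral
           (2 * pi * \<i> * complex_of_real (Pw c m (snd c + k)))) (circlepath 0 r)"
proof (induction m arbitrary: k)
  case 0
  have e1: "(\<lambda>\<xi>. \<xi> powi (k - 1) * phi N \<xi> ^ 0) = (\<lambda>\<xi>. \<xi> powi (k - 1))" by simp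
  have e2: "2 * pi * \<i> * complex_of_real (Pw c 0 (snd c + k)) = (if k - 1 = -1 then 2*pi*\<i> else 0)"
    by (simp add: Pw_0)
  show ?case unfolding e1 e2 by (rule circ_powi[OF r])
next
  case (Suc m)
  define a :: complex where "a = 1 - 1 / of_nat N"
  define b :: complex where "b = 1 / (2 * of_nat N)"
  have I: "((\<lambda>\<xi>. a * (\<xi> powi (k - 1) * phi N \<xi> ^ m) + (b * (\<xi> powi (k + 1 - 1) * phi N \<xi> ^ m)
            + b * (\<xi> powi (k - 1 - 1) * phi N \<xi> ^ m))) has_contour_integral
       (a * (2 * pi * \<i> * complex_of_real (Pw c m (snd c + k))) +
        (b * (2 * pi * \<i> * complex_of_real (Pw c m (snd c + (k + 1)))) +
         b * (2 * pi * \<i> * complex_of_real (Pw c m (snd c + (k - 1))))))) (circlepath 0 r)"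
    by (intro has_contour_integral_add has_contour_integral_lmul Suc.IH)
  have v: "a * (2 * pi * \<i> * complex_of_real (Pw c m (snd c + k))) +
        (b * (2 * pi * \<i> * complex_of_real (Pw c m (snd c + (k + 1)))) +
         b * (2 * pi * \<i> * complex_of_real (Pw c m (snd c + (k - 1))))) =
        2 * pi * \<i> * complex_of_real (Pw c (Suc m) (snd c + k))"
    unfolding Pw_Suc[OF iv, of m "snd c + k"] a_def b_def
    by (simp add: algebra_simps)
  show ?case
  proof (rule has_contour_integral_eq[OF I[unfolded v]])
    fix \<xi> :: complex assume "\<xi> \<in> path_image (circlepath 0 r)"
    then have nz: "\<xi> \<noteq> 0" using r by auto
    have p1: "\<xi> powi (k + 1 - 1) = \<xi> powi (k - 1) * \<xi>"
      using power_int_add_1[of \<xi> "k - 1"] nz by simp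
    have p2: "\<xi> powi (k - 1 - 1) = \<xi> powi (k - 1) / \<xi>"
      using power_int_diff[of \<xi> "k - 1" 1] nz by simp
    have ph: "phi N \<xi> = a + b * \<xi> + b / \<xi>"
      unfolding phi_def a_def b_def by (cases "N = 0") (simp_all add: field_simps)
    show "a * (\<xi> powi (k - 1) * phi N \<xi> ^ m) + (b * (\<xi> powi (k + 1 - 1) * phi N \<xi> ^ m)
            + b * (\<xi> powi (k - 1 - 1) * phi N \<xi> ^ m)) = \<xi> powi (k - 1) * phi N \<xi> ^ Suc m"
      unfolding p1 p2 power_Suc ph using nz by (simp add: field_simps)
  qed
qed

lemma phi_bound:
  assumes "N \<ge> 1" "norm \<xi> = r" "r > 0"
  shows "norm (phi N \<xi>) \<le> (1 - 1 / real N) + (r + 1 / r) / (2 * real N)"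
proof -
  have e: "phi N \<xi> = complex_of_real (1 - 1 / real N) + (\<xi> + 1 / \<xi>) / complex_of_real (2 * real N)"
    unfolding phi_def by simp
  have a: "0 \<le> 1 - 1 / real N" using assms(1) by (simp add: field_simps)
  have "norm (phi N \<xi>) \<le> norm (complex_of_real (1 - 1 / real N)) + norm ((\<xi> + 1 / \<xi>) / complex_of_real (2 * real N))"
    unfolding e by (rule norm_triangle_ineq)
  also have "norm (complex_of_real (1 - 1 / real N)) = 1 - 1 / real N" by (subst norm_of_real) (use a in simp)
  also have "norm ((\<xi> + 1 / \<xi>) / complex_of_real (2 * real N)) = norm (\<xi> + 1 / \<xi>) / (2 * real N)"
    using assms(1) by (simp add: norm_divide)
  also have "norm (\<xi> + 1 / \<xi>) \<le> r + 1 / r"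
    using norm_triangle_ineq[of \<xi> "1 / \<xi>"] assms by (simp add: norm_divide)
  finally show ?thesis using assms(1) by (simp add: divide_right_mono)
qed

lemma main_identity:
  assumes iv: "inv_c N c" and N1: "N \<ge> 1" and t: "t \<ge> 0" and r: "r > 0"
  shows "complex_of_real (\<Sum>n. exp (- real N * t) * (real N * t) ^ n / fact n * Pw c n x) =
    contour_integral (circlepath 0 r)
      (\<lambda>\<xi>. \<xi> powi (x - snd c - 1) * exp ((1 / (2 * \<xi>) + \<xi> / 2 - 1) * complex_of_real t))
    / (2 * pi * \<i>)"
proof -
  define k where "k = x - snd c"
  define w where "w i = exp (- real N * t) * (real N * t) ^ i / fact i" for i
  define g where "g i = w i * Pw c i x" for i
  define f where "f i \<xi> = complex_of_real (w i) * (\<xi> powi (k - 1) * phi N \<xi> ^ i)" for i \<xi>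
  define B where "B = (1 - 1 / real N) + (r + 1 / r) / (2 * real N)"
  define M where "M i = r powi (k - 1) * exp (- real N * t) * (inverse (fact i) * (real N * t * B) ^ i)" for i
  define target where "target = (\<lambda>\<xi>. \<xi> powi (x - snd c - 1) * exp ((1 / (2 * \<xi>) + \<xi> / 2 - 1) * complex_of_real t))"
  have xk: "snd c + k = x" unfolding k_def by simp
  have w0: "w i \<ge> 0" for i unfolding w_def using t by simp
  have hf: "(f i has_contour_integral (2 * pi * \<i> * complex_of_real (g i))) (circlepath 0 r)" for i
  proof -
    have "(f i has_contour_integral (complex_of_real (w i) * (2 * pi * \<i> * complex_of_real (Pw c i (snd c + k))))) (circlepath 0 r)"
      unfolding f_def by (intro has_contour_integral_lmul contour_walk[OF iv r])
    then show ?thesis unfolding xk g_def by (simp add: algebra_simps)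
  qed
  have hF: "((\<lambda>\<xi>. \<Sum>i<n. f i \<xi>) has_contour_integral (2 * pi * \<i> * complex_of_real (\<Sum>i<n. g i))) (circlepath 0 r)" for n
    using has_contour_integral_sum[of "{..<n}" f "\<lambda>i. 2 * pi * \<i> * complex_of_real (g i)" "circlepath 0 r"] hf
    by (simp add: sum_distrib_left)
  have ul: "uniform_limit (sphere 0 r) (\<lambda>n \<xi>. \<Sum>i<n. f i \<xi>) (\<lambda>\<xi>. \<Sum>i. f i \<xi>) sequentially"
  proof (rule Weierstrass_m_test)
    fix i \<xi> assume "\<xi> \<in> sphere (0::complex) r"
    then have nr: "norm \<xi> = r" by simp
    have pb: "norm (phi N \<xi>) \<le> B" unfolding B_def by (rule phi_bound[OF N1 nr r])
    have "norm (f i \<xi>) = w i * (r powi (k - 1) * norm (phi N \<xi>) ^ i)"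
      unfolding f_def using w0 nr by (simp add: norm_mult norm_power norm_power_int)
    also have "\<dots> \<le> w i * (r powi (k - 1) * B ^ i)"
      using pb w0 r by (intro mult_left_mono power_mono) auto
    also have "\<dots> = M i" unfolding M_def w_def by (simp add: power_mult_distrib field_simps)
    finally show "norm (f i \<xi>) \<le> M i" .
  next
    show "summable M" unfolding M_def by (rule summable_mult, rule summable_exp)
  qed
  have lim: "(\<lambda>n. contour_integral (circlepath 0 r) (\<lambda>\<xi>. \<Sum>i<n. f i \<xi>)) \<longlonglongrightarrow>
      contour_integral (circlepath 0 r) (\<lambda>\<xi>. \<Sum>i. f i \<xi>)"
  proof -
    have ie: "\<forall>\<^sub>F n in sequentially. (\<lambda>\<xi>. \<Sum>i<n. f i \<xi>) contour_integrable_on (circlepath 0 r)"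
      using hF has_contour_integral_integrable by (intro always_eventually) blast
    show ?thesis by (rule contour_integral_uniform_limit_circlepath(2)[OF ie ul trivial_limit_sequentially r])
  qed
  have eqt: "(\<Sum>i. f i \<xi>) = target \<xi>" if "\<xi> \<in> path_image (circlepath 0 r)" for \<xi>
  proof -
    have nz: "\<xi> \<noteq> 0" using that r by auto
    have Nz: "complex_of_nat N \<noteq> 0" using N1 by simp
    let ?C = "\<xi> powi (k - 1) * complex_of_real (exp (- real N * t))"
    let ?z = "complex_of_real (real N * t) * phi N \<xi>"
    have s1: "(\<lambda>i. ?C * (?z ^ i /\<^sub>R fact i)) sums (?C * exp ?z)"
      by (rule sums_mult[OF exp_converges])
    have fi: "f i \<xi> = ?C * (?z ^ i /\<^sub>R fact i)" for i
      unfolding f_def w_def by (simp add: scaleR_conv_of_real power_mult_distrib field_simps)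
    have arg: "complex_of_real (- real N * t) + ?z = (1 / (2 * \<xi>) + \<xi> / 2 - 1) * complex_of_real t"
      unfolding phi_def using Nz nz by (simp add: field_simps)
    have "?C * exp ?z = \<xi> powi (k - 1) * exp (complex_of_real (- real N * t) + ?z)"
      by (subst exp_add, subst exp_of_real) (simp only: mult.assoc)
    also have "\<dots> = target \<xi>" unfolding target_def k_def arg ..
    finally have "?C * exp ?z = target \<xi>" .
    then show ?thesis using s1 fi sums_unique by (metis (no_types, lifting) sums_cong)
  qed
  have lim2: "(\<lambda>n. 2 * pi * \<i> * complex_of_real (\<Sum>i<n. g i)) \<longlonglongrightarrow> contour_integral (circlepath 0 r) target"
  proof -
    have ceq: "contour_integral (circlepath 0 r) (\<lambda>\<xi>. \<Sum>i. f i \<xi>) = contour_integral (circlepath 0 r) target"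
      by (rule contour_integral_eq) (rule eqt)
    have hFc: "contour_integral (circlepath 0 r) (\<lambda>\<xi>. \<Sum>i<n. f i \<xi>) = 2 * pi * \<i> * complex_of_real (\<Sum>i<n. g i)" for n
      by (rule contour_integral_unique[OF hF])
    show ?thesis using lim by (simp only: ceq hFc)
  qed
  have sg: "summable g"
  proof (rule summable_comparison_test')
    have "w = (\<lambda>i. exp (- real N * t) * (inverse (fact i) * (real N * t) ^ i))"
      by (simp add: w_def fun_eq_iff field_simps)
    then show "summable w" by (simp only:) (rule summable_mult, rule summable_exp)
    fix n :: nat
    show "norm (g n) \<le> w n" unfolding g_def using w0[of n] pmf_le_1[of "map_pmf snd (n_steps n c)" x] pmf_nonneg
      by (simp add: Pw_def abs_mult mult_left_le)
  qed
  have lim3: "(\<lambda>n. 2 * pi * \<i> * complex_of_real (\<Sum>i<n. g i)) \<longlonglongrightarrow> 2 * pi * \<i> * complex_of_real (suminf g)"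
    by (intro tendsto_mult tendsto_const tendsto_of_real) (use sg summable_LIMSEQ in blast)
  have "2 * pi * \<i> * complex_of_real (suminf g) = contour_integral (circlepath 0 r) target"
    using LIMSEQ_unique[OF lim3 lim2] .
  then show ?thesis unfolding target_def g_def w_def by (simp add: field_simps)
qed

theorem corollary1p2:
  fixes N :: nat and y :: "nat \<Rightarrow> int" and t :: real and x :: int
  assumes "N \<ge> 1"
    and "\<And>i j. 1 \<le> i \<Longrightarrow> i < j \<Longrightarrow> j \<le> N \<Longrightarrow> y i < y j"
    and "t \<ge> 0"
  shows "\<exists>r0>0. \<forall>r. 0 < r \<and> r < r0 \<longrightarrow>
    complex_of_real (proc_prob t (y ` {1..<N}, y N) (\<lambda>c. snd c = x)) =
      contour_integral (circlepath 0 r)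
        (\<lambda>\<xi>. \<xi> powi (x - y N - 1) * exp ((1 / (2 * \<xi>) + \<xi> / 2 - 1) * complex_of_real t))
      / (2 * pi * \<i>)"
proof -
  define c where "c = (y ` {1..<N}, y N)"
  have inj: "inj_on y {1..<N}"
  proof (rule inj_onI)
    fix i j assume i: "i \<in> {1..<N}" and j: "j \<in> {1..<N}" and e: "y i = y j"
    show "i = j"
    proof (rule ccontr)
      assume "i \<noteq> j"
      then consider "i < j" | "j < i" by linarith
      then show False
        using assms(2)[of i j] assms(2)[of j i] i j e by cases auto
    qed
  qed
  have cardA: "card (y ` {1..<N}) = N - 1" using card_image[OF inj] by simp
  have sA: "y N \<notin> y ` {1..<N}"
  proof
    assume "y N \<in> y ` {1..<N}"
    then obtain i where "i \<in> {1..<N}" "y N = y i" by auto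
    then show False using assms(2)[of i N] by auto
  qed
  have iv: "inv_c N c" unfolding inv_c_def c_def using cardA sA assms(1) by simp
  have NN: "real (card (fst c) + 1) = real N" unfolding c_def using cardA assms(1) by simp
  have pp: "proc_prob t c (\<lambda>c. snd c = x) =
      (\<Sum>n. exp (- real N * t) * (real N * t) ^ n / fact n * Pw c n x)"
    unfolding proc_prob_def Let_def NN by (simp add: Pw_def pmf_map vimage_def)
  show ?thesis
  proof (intro exI[of _ 1] conjI allI impI)
    fix r :: real assume "0 < r \<and> r < 1"
    then have r: "r > 0" by simp
    show "complex_of_real (proc_prob t (y ` {1..<N}, y N) (\<lambda>c. snd c = x)) =
      contour_integral (circlepath 0 r)
        (\<lambda>\<xi>. \<xi> powi (x - y N - 1) * exp ((1 / (2 * \<xi>) + \<xi> / 2 - 1) * complex_of_real t))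
      / (2 * pi * \<i>)"
      using main_identity[OF iv assms(1) assms(3) r, of x] pp unfolding c_def by simp
  qed simp
qed

end
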